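(* For all integers $n\geq1$, $$\sum_{k=1}^{n}t^{2(n-k)}\left(\frac{\{k+1\}_{s,t}+t\{k-1\}_{s,t}}{s}\right)\{k\}_{s,t}^3=\left\{{n+1\atop 2}\right\}_{s,t}^2=\left(\sum_{k=1}^{n}\varphi^{2(n-k)}\varphi'^{\,k-1}\{k\}_{s,t}\right)^2.$$
   Context: Let $s,t$ be nonzero reals with $s^2+4t\neq0$; $\varphi=\frac{s+\sqrt{s^2+4t}}{2}$, $\varphi'=\frac{s-\sqrt{s^2+4t}}{2}$. Generalized Fibonacci polynomials: $\{0\}_{s,t}=0$, $\{1\}_{s,t}=1$, $\{n+2\}_{s,t}=s\{n+1\}_{s,t}+t\{n\}_{s,t}$ (so $\{n\}_{s,t}=\frac{\varphi^n-\varphi'^n}{\varphi-\varphi'}$). The generalized triangular numbers are $\left\{{n+1\atop 2}\right\}_{s,t}=\frac{\{n\}_{s,t}\{n+1\}_{s,t}}{s}$. *)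

theory Defs
  imports Complex_Main
begin

fun gfib :: "real \<Rightarrow> real \<Rightarrow> nat \<Rightarrow> real" where
  "gfib s t 0 = 0"
| "gfib s t (Suc 0) = 1"
| "gfib s t (Suc (Suc n)) = s * gfib s t (Suc n) + t * gfib s t n"

text \<open>Generalized triangular number {n+1 choose 2}_{s,t} = {n}{n+1}/s.\<close>
definition gtri :: "real \<Rightarrow> real \<Rightarrow> nat \<Rightarrow> real" where
  "gtri s t n = gfib s t n * gfib s t (Suc n) / s"

text \<open>Roots phi, phi' of x^2 = s x + t, taken in the complex numbers
  (s^2 + 4t may be negative).\<close>
definition gphi :: "real \<Rightarrow> real \<Rightarrow> complex" where
  "gphi s t = (complex_of_real s + csqrt (complex_of_real (s^2 + 4*t))) / 2"

definition gphi' :: "real \<Rightarrow> real \<Rightarrow> complex" where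
  "gphi' s t = (complex_of_real s - csqrt (complex_of_real (s^2 + 4*t))) / 2"

end

theory Submission
  imports Defs
begin

lemma sum_shift:
  fixes g :: "nat \<Rightarrow> 'a::comm_ring_1"
  shows "(\<Sum>k=1..Suc n. a^(2*(Suc n-k)) * g k) = a^2 * (\<Sum>k=1..n. a^(2*(n-k)) * g k) + g (Suc n)"
proof -
  have "(\<Sum>k=1..Suc n. a^(2*(Suc n-k)) * g k) = (\<Sum>k=1..n. a^(2*(Suc n-k)) * g k) + g (Suc n)"
    by simp
  also have "(\<Sum>k=1..n. a^(2*(Suc n-k)) * g k) = (\<Sum>k=1..n. a^2 * (a^(2*(n-k)) * g k))"
  proof (rule sum.cong)
    fix k assume "k \<in> {1..n}"
    then have "2*(Suc n-k) = 2 + 2*(n-k)" by auto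
    then show "a^(2*(Suc n-k)) * g k = a^2 * (a^(2*(n-k)) * g k)" by (simp add: power_add power2_eq_square)
  qed simp
  finally show ?thesis by (simp add: sum_distrib_left)
qed

lemma part1:
  assumes "s \<noteq> 0"
  shows "(\<Sum>k=1..n. t^(2*(n-k)) * (((gfib s t (k+1) + t * gfib s t (k-1)) / s) * (gfib s t k)^3))
           = (gtri s t n)^2"
proof (induction n)
  case 0 then show ?case by (simp add: gtri_def)
next
  case (Suc n)
  have r: "gfib s t (Suc (Suc n)) = s * gfib s t (Suc n) + t * gfib s t n" by simp
  show ?case
    unfolding sum_shift Suc gtri_def using assms
    by (simp add: r field_simps power2_eq_square power3_eq_cube)
qed

lemma part2:
  fixes s t :: real
  defines "p \<equiv> gphi s t" and "q \<equiv> gphi' s t"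
  assumes "s \<noteq> 0"
  shows "(\<Sum>k=1..n. p^(2*(n-k)) * (q^(k-1) * complex_of_real (gfib s t k)))
     = complex_of_real (gtri s t n)"
proof -
  let ?f = "\<lambda>k. complex_of_real (gfib s t k)"
  have sq: "(csqrt (complex_of_real (s^2 + 4*t)))^2 = complex_of_real (s^2+4*t)"
    by (rule power2_csqrt)
  have pp: "p^2 = complex_of_real s * p + complex_of_real t"
    unfolding p_def gphi_def using sq by (simp add: power2_eq_square field_simps)
  have qq: "q^2 = complex_of_real s * q + complex_of_real t"
    unfolding q_def gphi'_def using sq by (simp add: power2_eq_square field_simps)
  have pq: "p + q = complex_of_real s" unfolding p_def q_def gphi_def gphi'_def by (simp add: field_simps)
  have rec: "\<And>m. ?f (Suc (Suc m)) = complex_of_real s * ?f (Suc m) + complex_of_real t * ?f m" by simp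
  have key: "?f (m+2) - p^2 * ?f m = complex_of_real s * q^m" for m
  proof (induction m rule: nat_less_induct)
    case (1 m)
    show ?case
    proof (cases m)
      case 0 then show ?thesis by simp
    next
      case (Suc m1)
      show ?thesis
      proof (cases m1)
        case 0
        have "?f 3 - p^2 * ?f 1 = complex_of_real s * complex_of_real s + complex_of_real t - p^2"
          by (simp add: numeral_3_eq_3)
        also have "\<dots> = complex_of_real s * q" using pp pq[symmetric] by (simp add: algebra_simps)
        finally show ?thesis using Suc 0 by (simp add: numeral_3_eq_3)
      next
        case (Suc m2)
        have h1: "?f (m2+3) - p^2 * ?f (m2+1) = complex_of_real s * q^(m2+1)"
          using "1.IH"[rule_format, of "m2+1"] \<open>m = Suc m1\<close> Suc by (simp add: numeral_3_eq_3)
        have h2: "?f (m2+2) - p^2 * ?f m2 = complex_of_real s * q^m2"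
          using "1.IH"[rule_format, of m2] \<open>m = Suc m1\<close> Suc by simp
        have "?f (m+2) - p^2 * ?f m = complex_of_real s * (?f (m2+3) - p^2 * ?f (m2+1))
              + complex_of_real t * (?f (m2+2) - p^2 * ?f m2)"
          using \<open>m = Suc m1\<close> Suc rec by (simp add: numeral_3_eq_3 algebra_simps)
        also have "\<dots> = complex_of_real s * q^m2 * (complex_of_real s * q + complex_of_real t)"
          using h1 h2 by (simp add: algebra_simps)
        also have "\<dots> = complex_of_real s * q^m"
        proof -
          have "q^m = q^m2 * q^2" using \<open>m = Suc m1\<close> Suc by (simp add: power2_eq_square)
          then show ?thesis using qq by simp
        qed
        finally show ?thesis .
      qed
    qed
  qed
  show ?thesis
  proof (induction n)
    case 0 then show ?case by (simp add: gtri_def)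
  next
    case (Suc n)
    have "(\<Sum>k=1..Suc n. p^(2*(Suc n-k)) * (q^(k-1) * ?f k))
        = p^2 * complex_of_real (gtri s t n) + q^n * ?f (Suc n)"
      unfolding sum_shift Suc by simp
    also have "\<dots> = complex_of_real (gtri s t (Suc n))"
    proof -
      have k: "?f (n+2) = p^2 * ?f n + complex_of_real s * q^n" using key[of n] by (simp add: algebra_simps)
      have "complex_of_real (gtri s t (Suc n)) = ?f (Suc n) * ?f (n+2) / complex_of_real s"
        by (simp add: gtri_def)
      also have "\<dots> = p^2 * complex_of_real (gtri s t n) + q^n * ?f (Suc n)"
        unfolding k using assms by (simp add: gtri_def field_simps)
      finally show ?thesis by simp
    qed
    finally show ?case .
  qed
qed

theorem mainTheorem13:
  fixes s t :: real and n :: nat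
  assumes "s \<noteq> 0" and "t \<noteq> 0" and "s^2 + 4*t \<noteq> 0" and "n \<ge> 1"
  shows "(\<Sum>k=1..n. t^(2*(n-k)) * ((gfib s t (k+1) + t * gfib s t (k-1)) / s) * (gfib s t k)^3)
           = (gtri s t n)^2
       \<and> complex_of_real ((gtri s t n)^2)
           = (\<Sum>k=1..n. (gphi s t)^(2*(n-k)) * (gphi' s t)^(k-1) * complex_of_real (gfib s t k))^2"
  using part1[OF assms(1), of t n] part2[of s t n, OF assms(1)]
  by (simp add: mult.assoc)

end
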